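(* Let $(\Omega,\Sigma,\mu)$ be a measure space with the direct sum property, $L^0=L^0(\Omega,\Sigma,\mu)$, and $n\in\mathbb N$. Every derivation $D$ on the algebra $M_n(L^0)$ of $n\times n$ matrices over $L^0$ admits a unique decomposition $$D=D_a+D_\delta,$$ where $D_a(x)=ax-xa$ for some $a\in M_n(L^0)$ is an inner derivation and $D_\delta$ is the derivation given by $D_\delta((\lambda_{ij})_{i,j=1}^n)=(\delta(\lambda_{ij}))_{i,j=1}^n$ for some derivation $\delta:L^0\to L^0$. Uniqueness means: if $D=D_{a_1}+D_{\delta_1}=D_{a_2}+D_{\delta_2}$ then $\delta_1=\delta_2$ and $D_{a_1}=D_{a_2}$.
   Context: A linear map $D:A\to A$ on a complex algebra is a derivation if $D(xy)=D(x)y+xD(y)$ for all $x,y$. $L^0(\Omega,\Sigma,\mu)$ is the algebra of equivalence classes (a.e. equality) of complex measurable functions. Direct sum property of $\mu$: there is a family $\{\Omega_i\}_{i\in J}\subset\Sigma$ with $0<\mu(\Omega_i)<\infty$ such that each $A\in\Sigma$ with $\mu(A)<\infty$ equals $\bigcup_{i\in J_0}(A\cap\Omega_i)\cup B$ for some countable $J_0\subset J$ and a null set $B$. *)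

theory Defs
  imports "HOL-Probability.Probability"
begin

text \<open>L^0(Omega,Sigma,mu) is modelled as the setoid of complex measurable
functions on the space of M, modulo equality almost everywhere.\<close>

definition L0 :: "'a measure \<Rightarrow> ('a \<Rightarrow> complex) set" where
  "L0 M = borel_measurable M"

definition ae_eq :: "'a measure \<Rightarrow> ('a \<Rightarrow> complex) \<Rightarrow> ('a \<Rightarrow> complex) \<Rightarrow> bool" where
  "ae_eq M f g \<longleftrightarrow> (AE x in M. f x = g x)"

definition direct_sum_property :: "'a measure \<Rightarrow> bool" where
  "direct_sum_property M \<longleftrightarrow>
     (\<exists>J::'i set. \<exists>\<Omega>i :: 'i \<Rightarrow> 'a set.
        (\<forall>i\<in>J. \<Omega>i i \<in> sets M \<and> 0 < emeasure M (\<Omega>i i) \<and> emeasure M (\<Omega>i i) < \<infinity>) \<and>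
        (\<forall>A\<in>sets M. emeasure M A < \<infinity> \<longrightarrow>
           (\<exists>J0 \<subseteq> J. countable J0 \<and> (\<exists>B \<in> null_sets M.
              A = (\<Union>i\<in>J0. A \<inter> \<Omega>i i) \<union> B))))"

definition L0_derivation :: "'a measure \<Rightarrow> (('a \<Rightarrow> complex) \<Rightarrow> ('a \<Rightarrow> complex)) \<Rightarrow> bool" where
  "L0_derivation M \<delta> \<longleftrightarrow>
     (\<forall>f\<in>L0 M. \<delta> f \<in> L0 M) \<and>
     (\<forall>f\<in>L0 M. \<forall>g\<in>L0 M. ae_eq M f g \<longrightarrow> ae_eq M (\<delta> f) (\<delta> g)) \<and>
     (\<forall>f\<in>L0 M. \<forall>g\<in>L0 M. \<forall>c::complex.
        ae_eq M (\<delta> (\<lambda>x. c * f x + g x)) (\<lambda>x. c * \<delta> f x + \<delta> g x)) \<and>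
     (\<forall>f\<in>L0 M. \<forall>g\<in>L0 M.
        ae_eq M (\<delta> (\<lambda>x. f x * g x)) (\<lambda>x. \<delta> f x * g x + f x * \<delta> g x))"

text \<open>n x n matrices over L^0: entries X i j for i, j < n (other entries irrelevant).\<close>
type_synonym 'a L0mat = "nat \<Rightarrow> nat \<Rightarrow> 'a \<Rightarrow> complex"

definition matL0 :: "'a measure \<Rightarrow> nat \<Rightarrow> 'a L0mat set" where
  "matL0 M n = {X. \<forall>i<n. \<forall>j<n. X i j \<in> L0 M}"

definition mat_eq :: "'a measure \<Rightarrow> nat \<Rightarrow> 'a L0mat \<Rightarrow> 'a L0mat \<Rightarrow> bool" where
  "mat_eq M n X Y \<longleftrightarrow> (\<forall>i<n. \<forall>j<n. ae_eq M (X i j) (Y i j))"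

definition mat_add :: "'a L0mat \<Rightarrow> 'a L0mat \<Rightarrow> 'a L0mat" where
  "mat_add X Y = (\<lambda>i j x. X i j x + Y i j x)"

definition mat_diff :: "'a L0mat \<Rightarrow> 'a L0mat \<Rightarrow> 'a L0mat" where
  "mat_diff X Y = (\<lambda>i j x. X i j x - Y i j x)"

definition mat_scale :: "complex \<Rightarrow> 'a L0mat \<Rightarrow> 'a L0mat" where
  "mat_scale c X = (\<lambda>i j x. c * X i j x)"

definition mat_mult :: "nat \<Rightarrow> 'a L0mat \<Rightarrow> 'a L0mat \<Rightarrow> 'a L0mat" where
  "mat_mult n X Y = (\<lambda>i j x. \<Sum>k<n. X i k x * Y k j x)"

definition mat_derivation :: "'a measure \<Rightarrow> nat \<Rightarrow> ('a L0mat \<Rightarrow> 'a L0mat) \<Rightarrow> bool" where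
  "mat_derivation M n D \<longleftrightarrow>
     (\<forall>X\<in>matL0 M n. D X \<in> matL0 M n) \<and>
     (\<forall>X\<in>matL0 M n. \<forall>Y\<in>matL0 M n. mat_eq M n X Y \<longrightarrow> mat_eq M n (D X) (D Y)) \<and>
     (\<forall>X\<in>matL0 M n. \<forall>Y\<in>matL0 M n. \<forall>c::complex.
        mat_eq M n (D (mat_add (mat_scale c X) Y)) (mat_add (mat_scale c (D X)) (D Y))) \<and>
     (\<forall>X\<in>matL0 M n. \<forall>Y\<in>matL0 M n.
        mat_eq M n (D (mat_mult n X Y)) (mat_add (mat_mult n (D X) Y) (mat_mult n X (D Y))))"

definition inner_der :: "nat \<Rightarrow> 'a L0mat \<Rightarrow> 'a L0mat \<Rightarrow> 'a L0mat" where
  "inner_der n a X = mat_diff (mat_mult n a X) (mat_mult n X a)"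

definition entry_der :: "(('a \<Rightarrow> complex) \<Rightarrow> ('a \<Rightarrow> complex)) \<Rightarrow> 'a L0mat \<Rightarrow> 'a L0mat" where
  "entry_der \<delta> X = (\<lambda>i j. \<delta> (X i j))"

end

theory Submission
  imports Defs
begin


lemma AE_all_lt: "(AE x in M. \<forall>q<(n::nat). P q x) \<longleftrightarrow> (\<forall>q<n. AE x in M. P q x)"
proof -
  have "(AE x in M. \<forall>q\<in>{..<n}. P q x) \<longleftrightarrow> (\<forall>q\<in>{..<n}. AE x in M. P q x)"
    by (rule eventually_ball_finite_distrib) simp
  thus ?thesis unfolding Ball_def lessThan_iff .
qed

lemma mat_eq_AE: "mat_eq M n X Y \<longleftrightarrow> (AE x in M. \<forall>i<n. \<forall>j<n. X i j x = Y i j x)"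
  unfolding mat_eq_def ae_eq_def AE_all_lt[where M=M and n=n] by simp

lemma mat_eq_trans: "mat_eq M n X Y \<Longrightarrow> mat_eq M n Y Z \<Longrightarrow> mat_eq M n X Z"
  unfolding mat_eq_AE by (auto elim: AE_mp)
lemma mat_eq_sym: "mat_eq M n X Y \<Longrightarrow> mat_eq M n Y X"
  unfolding mat_eq_AE by (auto elim: AE_mp)

lemma matL0_mult: "X \<in> matL0 M n \<Longrightarrow> Y \<in> matL0 M n \<Longrightarrow> mat_mult n X Y \<in> matL0 M n"
  unfolding matL0_def L0_def mat_mult_def by (auto intro!: borel_measurable_sum borel_measurable_times)
lemma matL0_diff: "X \<in> matL0 M n \<Longrightarrow> Y \<in> matL0 M n \<Longrightarrow> mat_diff X Y \<in> matL0 M n"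
  unfolding matL0_def L0_def mat_diff_def by (auto intro!: borel_measurable_diff)
lemma matL0_add: "X \<in> matL0 M n \<Longrightarrow> Y \<in> matL0 M n \<Longrightarrow> mat_add X Y \<in> matL0 M n"
  unfolding matL0_def L0_def mat_add_def by (auto intro!: borel_measurable_add)

lemma times_if_r: "(a::complex) * (if P then 1 else 0) = (if P then a else 0)" by simp

definition E :: "nat \<Rightarrow> nat \<Rightarrow> 'a L0mat" where
  "E i j = (\<lambda>p q x. if p = i \<and> q = j then 1 else 0)"
definition S :: "('a \<Rightarrow> complex) \<Rightarrow> 'a L0mat" where
  "S f = (\<lambda>p q x. if p = 0 \<and> q = 0 then f x else 0)"

lemma E_in: "E i j \<in> matL0 M n"
  unfolding matL0_def L0_def E_def by auto
lemma S_in: "f \<in> L0 M \<Longrightarrow> S f \<in> matL0 M n"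
  unfolding matL0_def L0_def S_def by auto

lemma multE_left: "i < n \<Longrightarrow> mat_mult n (E p0 i) W p q x = (if p = p0 then W i q x else 0)"
  unfolding mat_mult_def E_def by (cases "p = p0") (simp_all add: mult_if_delta)
lemma multE_right: "j < n \<Longrightarrow> mat_mult n W (E j q0) p q x = (if q = q0 then W p j x else 0)"
  unfolding mat_mult_def E_def by (cases "q = q0") (simp_all add: times_if_r)



lemma der_closed: "mat_derivation M n D \<Longrightarrow> X \<in> matL0 M n \<Longrightarrow> D X \<in> matL0 M n"
  unfolding mat_derivation_def by blast
lemma der_resp: "mat_derivation M n D \<Longrightarrow> X \<in> matL0 M n \<Longrightarrow> Y \<in> matL0 M n \<Longrightarrow> mat_eq M n X Y \<Longrightarrow> mat_eq M n (D X) (D Y)"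
  unfolding mat_derivation_def by blast
lemma der_lin: "mat_derivation M n D \<Longrightarrow> X \<in> matL0 M n \<Longrightarrow> Y \<in> matL0 M n \<Longrightarrow> mat_eq M n (D (mat_add (mat_scale c X) Y)) (mat_add (mat_scale c (D X)) (D Y))"
  unfolding mat_derivation_def by blast
lemma der_leib: "mat_derivation M n D \<Longrightarrow> X \<in> matL0 M n \<Longrightarrow> Y \<in> matL0 M n \<Longrightarrow> mat_eq M n (D (mat_mult n X Y)) (mat_add (mat_mult n (D X) Y) (mat_mult n X (D Y)))"
  unfolding mat_derivation_def by blast

lemma EE: "j < n \<Longrightarrow> mat_mult n (E i j) (E k l) p q x = (if p = i \<and> j = k \<and> q = l then 1 else 0)"
proof -
  assume "j < n"
  hence "mat_mult n (E i j) (E k l) p q x = (if p = i then E k l j q x else 0)" by (rule multE_left)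
  thus ?thesis by (simp add: E_def)
qed

lemma helper_eq: "(A::complex) = B + C \<Longrightarrow> A' = A \<Longrightarrow> B = A' - C" by simp

lemma Z_in: "(\<lambda>i j x. 0) \<in> matL0 M n"
  unfolding matL0_def L0_def by auto

lemma der_zero:
  assumes d: "mat_derivation M n D"
  shows "mat_eq M n (D (\<lambda>i j x. 0)) (\<lambda>i j x. 0)"
proof -
  have e: "mat_add (mat_scale 1 (\<lambda>i j x. 0)) (\<lambda>i j x. 0) = (\<lambda>i j (x::'a). 0::complex)"
    by (simp add: mat_add_def mat_scale_def)
  have "mat_eq M n (D (\<lambda>i j x. 0)) (mat_add (mat_scale 1 (D (\<lambda>i j x. 0))) (D (\<lambda>i j x. 0)))"
    using der_lin[OF d Z_in Z_in, of 1] unfolding e .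
  thus ?thesis unfolding mat_eq_AE mat_add_def mat_scale_def
    by (auto elim!: AE_mp)
qed

lemma K1:
  assumes d: "mat_derivation M n D" and ij: "i < n" "j < n"
  shows "AE x in M. \<forall>p<n. \<forall>q<n. D (E i j) p q x =
     (if q = j then D (E i 0) p 0 x else 0) - (if p = i then D (E q 0) j 0 x else 0)"
proof -
  have n0: "0 < n" using ij by simp
  have "\<forall>q<n. AE x in M. \<forall>p<n. D (E i j) p q x =
     (if q = j then D (E i 0) p 0 x else 0) - (if p = i then D (E q 0) j 0 x else 0)"
  proof (intro allI impI)
    fix q assume q: "q < n"
    have L: "mat_eq M n (D (mat_mult n (E i j) (E q 0))) (mat_add (mat_mult n (D (E i j)) (E q 0)) (mat_mult n (E i j) (D (E q 0))))"
      by (rule der_leib[OF d E_in E_in])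
    have C: "mat_eq M n (D (mat_mult n (E i j) (E q 0))) (if j = q then D (E i 0) else (\<lambda>i j x. 0))"
    proof (cases "j = q")
      case True
      have "mat_eq M n (mat_mult n (E i j) (E q 0)) (E i 0)"
        unfolding mat_eq_AE using ij True by (simp add: EE; simp add: E_def)
      then show ?thesis using True der_resp[OF d matL0_mult[OF E_in E_in] E_in] by simp
    next
      case False
      have "mat_eq M n (mat_mult n (E i j) (E q 0)) (\<lambda>i j x. 0)"
        unfolding mat_eq_AE using ij False by (simp add: EE; simp add: E_def)
      then show ?thesis using False mat_eq_trans[OF der_resp[OF d matL0_mult[OF E_in E_in] Z_in] der_zero[OF d]] by simp
    qed
    have "mat_eq M n (if j = q then D (E i 0) else (\<lambda>i j x. 0)) (mat_add (mat_mult n (D (E i j)) (E q 0)) (mat_mult n (E i j) (D (E q 0))))"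
      using mat_eq_trans[OF mat_eq_sym[OF C] L] .
    then have "AE x in M. \<forall>p<n. (if j = q then D (E i 0) p 0 x else 0) = D (E i j) p q x + (if p = i then D (E q 0) j 0 x else 0)"
      unfolding mat_eq_AE
    proof (rule AE_mp, intro AE_I2 impI allI)
      fix x p assume h: "\<forall>ia<n. \<forall>ja<n. (if j = q then D (E i 0) else (\<lambda>i j x. 0)) ia ja x =
           mat_add (mat_mult n (D (E i j)) (E q 0)) (mat_mult n (E i j) (D (E q 0))) ia ja x" and p: "p < n"
      have "(if j = q then D (E i 0) p 0 x else 0) = (if j = q then D (E i 0) else (\<lambda>i j x. 0)) p 0 x"
        by simp
      also have "\<dots> = mat_mult n (D (E i j)) (E q 0) p 0 x + mat_mult n (E i j) (D (E q 0)) p 0 x"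
        using h[rule_format, OF p n0] unfolding mat_add_def .
      also have "mat_mult n (D (E i j)) (E q 0) p 0 x = D (E i j) p q x" by (simp add: multE_right[OF q])
      also have "mat_mult n (E i j) (D (E q 0)) p 0 x = (if p = i then D (E q 0) j 0 x else 0)" by (rule multE_left[OF ij(2)])
      finally show "(if j = q then D (E i 0) p 0 x else 0) = D (E i j) p q x + (if p = i then D (E q 0) j 0 x else 0)" .
    qed
    then show "AE x in M. \<forall>p<n. D (E i j) p q x =
     (if q = j then D (E i 0) p 0 x else 0) - (if p = i then D (E q 0) j 0 x else 0)"
    proof (rule AE_mp, intro AE_I2 impI allI)
      fix x p assume h: "\<forall>p<n. (if j = q then D (E i 0) p 0 x else 0) = D (E i j) p q x + (if p = i then D (E q 0) j 0 x else 0)"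
        and p: "p < n"
      have a: "(if j = q then D (E i 0) p 0 x else 0) = D (E i j) p q x + (if p = i then D (E q 0) j 0 x else 0)"
        using h p by blast
      have e: "(if q = j then D (E i 0) p 0 x else 0) = (if j = q then D (E i 0) p 0 x else 0)" by auto
      show "D (E i j) p q x = (if q = j then D (E i 0) p 0 x else 0) - (if p = i then D (E q 0) j 0 x else 0)"
        by (rule helper_eq[OF a e])
    qed
  qed
  then have "AE x in M. \<forall>q<n. \<forall>p<n. D (E i j) p q x =
     (if q = j then D (E i 0) p 0 x else 0) - (if p = i then D (E q 0) j 0 x else 0)"
    by (rule iffD2[OF AE_all_lt])
  then show ?thesis by (rule AE_mp, intro AE_I2 impI allI) simp
qed



definition amat :: "('a L0mat \<Rightarrow> 'a L0mat) \<Rightarrow> 'a L0mat" where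
  "amat D = (\<lambda>p q x. D (E q 0) p 0 x)"
definition del :: "('a L0mat \<Rightarrow> 'a L0mat) \<Rightarrow> ('a \<Rightarrow> complex) \<Rightarrow> ('a \<Rightarrow> complex)" where
  "del D = (\<lambda>f x. D (S f) 0 0 x)"

lemma amat_in: assumes d: "mat_derivation M n D" and n0: "0 < n" shows "amat D \<in> matL0 M n"
  using der_closed[OF d E_in] n0 unfolding matL0_def amat_def by auto

lemma main_entry:
  assumes d: "mat_derivation M n D" and X: "X \<in> matL0 M n" and ij: "i < n" "j < n"
  shows "ae_eq M (D X i j) (mat_add (inner_der n (amat D) X) (entry_der (del D) X) i j)"
proof -
  have n0: "0 < n" using ij by simp
  define Z' where "Z' = mat_mult n X (E j 0)"
  define Y where "Y = mat_mult n (E 0 i) Z'"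
  define F where "F = S (X i j)"
  have Xij: "X i j \<in> L0 M" using X ij unfolding matL0_def by auto
  have Z'in: "Z' \<in> matL0 M n" unfolding Z'_def by (rule matL0_mult[OF X E_in])
  have Yin: "Y \<in> matL0 M n" unfolding Y_def by (rule matL0_mult[OF E_in Z'in])
  have Fin: "F \<in> matL0 M n" unfolding F_def by (rule S_in[OF Xij])
  have YF: "mat_eq M n Y F"
    unfolding mat_eq_AE
  proof (intro AE_I2 allI impI)
    fix x p q assume "p < n" "q < n"
    show "Y p q x = F p q x"
      unfolding Y_def multE_left[OF ij(1)] Z'_def multE_right[OF ij(2)] F_def S_def by simp
  qed
  have A1: "AE x in M. \<forall>p<n. \<forall>q<n. D Y p q x = D F p q x"
    using der_resp[OF d Yin Fin YF] unfolding mat_eq_AE .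
  have A2: "AE x in M. \<forall>p<n. \<forall>q<n. D Y p q x = mat_add (mat_mult n (D (E 0 i)) Z') (mat_mult n (E 0 i) (D Z')) p q x"
    using der_leib[OF d E_in Z'in] unfolding mat_eq_AE Y_def .
  have A3: "AE x in M. \<forall>p<n. \<forall>q<n. D Z' p q x = mat_add (mat_mult n (D X) (E j 0)) (mat_mult n X (D (E j 0))) p q x"
    using der_leib[OF d X E_in] unfolding mat_eq_AE Z'_def .
  note A4 = K1[OF d n0 ij(1)]
  note A5 = K1[OF d ij(2) n0]
  from A1 A2 A3 A4 A5 show ?thesis
    unfolding ae_eq_def
  proof eventually_elim
    case (elim x)
    note h1 = elim(1) and h2 = elim(2) and h3 = elim(3) and h4 = elim(4) and h5 = elim(5)
    have c0: "D (E 0 0) 0 0 x = 0"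
      using h5[rule_format, OF ij(2) n0] by simp
    have "del D (X i j) x = D F 0 0 x" unfolding del_def F_def ..
    also have "\<dots> = D Y 0 0 x" using h1 n0 by simp
    also have "\<dots> = mat_mult n (D (E 0 i)) Z' 0 0 x + mat_mult n (E 0 i) (D Z') 0 0 x"
      using h2 n0 by (simp add: mat_add_def)
    also have "mat_mult n (D (E 0 i)) Z' 0 0 x = (\<Sum>m<n. - (D (E m 0) i 0 x * X m j x))"
      unfolding mat_mult_def
    proof (rule sum.cong[OF refl])
      fix m assume m: "m \<in> {..<n}"
      have "D (E 0 i) 0 m x = - D (E m 0) i 0 x"
        using h4[rule_format, OF n0] m c0 by simp
      moreover have "Z' m 0 x = X m j x" unfolding Z'_def multE_right[OF ij(2)] by simp
      ultimately show "D (E 0 i) 0 m x * Z' m 0 x = - (D (E m 0) i 0 x * X m j x)" by simp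
    qed
    also have "mat_mult n (E 0 i) (D Z') 0 0 x = D Z' i 0 x" unfolding multE_left[OF ij(1)] by simp
    also have "\<dots> = D X i j x + (\<Sum>m<n. X i m x * D (E j 0) m 0 x)"
    proof -
      have "D Z' i 0 x = mat_mult n (D X) (E j 0) i 0 x + mat_mult n X (D (E j 0)) i 0 x"
        using h3 ij n0 by (simp add: mat_add_def)
      also have "mat_mult n (D X) (E j 0) i 0 x = D X i j x" unfolding multE_right[OF ij(2)] by simp
      finally show ?thesis unfolding mat_mult_def .
    qed
    finally have key: "del D (X i j) x = (\<Sum>m<n. - (D (E m 0) i 0 x * X m j x)) + (D X i j x + (\<Sum>m<n. X i m x * D (E j 0) m 0 x))" .
    have inn: "inner_der n (amat D) X i j x = (\<Sum>m<n. D (E m 0) i 0 x * X m j x) - (\<Sum>m<n. X i m x * D (E j 0) m 0 x)"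
      unfolding inner_der_def mat_diff_def mat_mult_def amat_def ..
    show ?case
      unfolding mat_add_def entry_der_def inn key by (simp add: sum_negf)
  qed
qed



lemma multS_right: "0 < n \<Longrightarrow> mat_mult n W (S g) p q x = (if q = 0 then W p 0 x * g x else 0)"
proof -
  assume n0: "0 < n"
  have "mat_mult n W (S g) p q x = (\<Sum>k<n. if k = 0 then (if q = 0 then W p 0 x * g x else 0) else 0)"
    unfolding mat_mult_def S_def by (rule sum.cong) auto
  also have "\<dots> = (if q = 0 then W p 0 x * g x else 0)" using n0 by (simp add: sum.delta)
  finally show ?thesis .
qed

lemma multS_left: "0 < n \<Longrightarrow> mat_mult n (S f) W p q x = (if p = 0 then f x * W 0 q x else 0)"
proof -
  assume n0: "0 < n"
  have "mat_mult n (S f) W p q x = (\<Sum>k<n. if k = 0 then (if p = 0 then f x * W 0 q x else 0) else 0)"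
    unfolding mat_mult_def S_def by (rule sum.cong) auto
  also have "\<dots> = (if p = 0 then f x * W 0 q x else 0)" using n0 by (simp add: sum.delta)
  finally show ?thesis .
qed

lemma S00: "S f 0 0 = f" unfolding S_def by simp

lemma del_derivation:
  assumes d: "mat_derivation M n D" and n0: "0 < n"
  shows "L0_derivation M (del D)"
  unfolding L0_derivation_def
proof (intro conjI ballI allI impI)
  fix f assume f: "f \<in> L0 M"
  have "D (S f) \<in> matL0 M n" by (rule der_closed[OF d S_in[OF f]])
  then have "D (S f) 0 0 \<in> L0 M" using n0 unfolding matL0_def by auto
  moreover have "del D f = D (S f) 0 0" unfolding del_def by simp
  ultimately show "del D f \<in> L0 M" by simp
next
  fix f g assume f: "f \<in> L0 M" and g: "g \<in> L0 M" and fg: "ae_eq M f g"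
  have "mat_eq M n (S f) (S g)"
    using fg unfolding mat_eq_AE ae_eq_def S_def by (rule AE_mp) (intro AE_I2, simp)
  from der_resp[OF d S_in[OF f] S_in[OF g] this]
  show "ae_eq M (del D f) (del D g)"
    unfolding mat_eq_AE ae_eq_def del_def by (rule AE_mp) (intro AE_I2, simp add: n0)
next
  fix f g c assume f: "f \<in> L0 M" and g: "g \<in> L0 M"
  have e: "S (\<lambda>x. c * f x + g x) = mat_add (mat_scale c (S f)) (S g)"
    unfolding S_def mat_add_def mat_scale_def by (intro ext) simp
  from der_lin[OF d S_in[OF f] S_in[OF g], of c]
  show "ae_eq M (del D (\<lambda>x. c * f x + g x)) (\<lambda>x. c * del D f x + del D g x)"
    unfolding mat_eq_AE ae_eq_def del_def e
    by (rule AE_mp) (intro AE_I2, simp add: n0 mat_add_def mat_scale_def)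
next
  fix f g assume f: "f \<in> L0 M" and g: "g \<in> L0 M"
  have fgin: "(\<lambda>x. f x * g x) \<in> L0 M" using f g unfolding L0_def by auto
  have "mat_eq M n (S (\<lambda>x. f x * g x)) (mat_mult n (S f) (S g))"
    unfolding mat_eq_AE by (intro AE_I2 allI impI) (simp only: multS_left[OF n0], simp add: S_def)
  from mat_eq_trans[OF der_resp[OF d S_in[OF fgin] matL0_mult[OF S_in[OF f] S_in[OF g]] this]
      der_leib[OF d S_in[OF f] S_in[OF g]]]
  show "ae_eq M (del D (\<lambda>x. f x * g x)) (\<lambda>x. del D f x * g x + f x * del D g x)"
    unfolding mat_eq_AE ae_eq_def del_def
    by (rule AE_mp) (intro AE_I2, simp add: n0 mat_add_def multS_left[OF n0] multS_right[OF n0])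
qed

lemma inner_S00: "0 < n \<Longrightarrow> inner_der n a (S f) 0 0 x = 0"
  unfolding inner_der_def mat_diff_def by (simp add: multS_left multS_right)


theorem lemma3p1:
  fixes M :: "'a measure" and n :: nat and D :: "'a L0mat \<Rightarrow> 'a L0mat"
  assumes "direct_sum_property TYPE('i) M"
    and "n \<ge> 1"
    and "mat_derivation M n D"
  shows "(\<exists>a\<in>matL0 M n. \<exists>\<delta>. L0_derivation M \<delta> \<and>
            (\<forall>X\<in>matL0 M n. mat_eq M n (D X) (mat_add (inner_der n a X) (entry_der \<delta> X))))
       \<and> (\<forall>a1\<in>matL0 M n. \<forall>a2\<in>matL0 M n. \<forall>\<delta>1 \<delta>2.
            L0_derivation M \<delta>1 \<longrightarrow> L0_derivation M \<delta>2 \<longrightarrow>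
            (\<forall>X\<in>matL0 M n. mat_eq M n (D X) (mat_add (inner_der n a1 X) (entry_der \<delta>1 X))) \<longrightarrow>
            (\<forall>X\<in>matL0 M n. mat_eq M n (D X) (mat_add (inner_der n a2 X) (entry_der \<delta>2 X))) \<longrightarrow>
            (\<forall>f\<in>L0 M. ae_eq M (\<delta>1 f) (\<delta>2 f)) \<and>
            (\<forall>X\<in>matL0 M n. mat_eq M n (inner_der n a1 X) (inner_der n a2 X)))"
proof -
  have d: "mat_derivation M n D" by fact
  have n0: "0 < n" using assms(2) by simp
  have ex: "\<exists>a\<in>matL0 M n. \<exists>\<delta>. L0_derivation M \<delta> \<and>
            (\<forall>X\<in>matL0 M n. mat_eq M n (D X) (mat_add (inner_der n a X) (entry_der \<delta> X)))"
  proof (intro bexI exI conjI ballI)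
    show "amat D \<in> matL0 M n" by (rule amat_in[OF d n0])
    show "L0_derivation M (del D)" by (rule del_derivation[OF d n0])
    fix X assume X: "X \<in> matL0 M n"
    show "mat_eq M n (D X) (mat_add (inner_der n (amat D) X) (entry_der (del D) X))"
      unfolding mat_eq_def using main_entry[OF d X] by blast
  qed
  have un: "\<forall>a1\<in>matL0 M n. \<forall>a2\<in>matL0 M n. \<forall>\<delta>1 \<delta>2.
            L0_derivation M \<delta>1 \<longrightarrow> L0_derivation M \<delta>2 \<longrightarrow>
            (\<forall>X\<in>matL0 M n. mat_eq M n (D X) (mat_add (inner_der n a1 X) (entry_der \<delta>1 X))) \<longrightarrow>
            (\<forall>X\<in>matL0 M n. mat_eq M n (D X) (mat_add (inner_der n a2 X) (entry_der \<delta>2 X))) \<longrightarrow>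
            (\<forall>f\<in>L0 M. ae_eq M (\<delta>1 f) (\<delta>2 f)) \<and>
            (\<forall>X\<in>matL0 M n. mat_eq M n (inner_der n a1 X) (inner_der n a2 X))"
  proof (intro ballI allI impI)
    fix a1 a2 \<delta>1 \<delta>2
    assume H1: "\<forall>X\<in>matL0 M n. mat_eq M n (D X) (mat_add (inner_der n a1 X) (entry_der \<delta>1 X))"
      and H2: "\<forall>X\<in>matL0 M n. mat_eq M n (D X) (mat_add (inner_der n a2 X) (entry_der \<delta>2 X))"
    have dd: "ae_eq M (\<delta>1 f) (\<delta>2 f)" if f: "f \<in> L0 M" for f
    proof -
      have "\<forall>i<n. \<forall>j<n. AE x in M. D (S f) i j x = inner_der n a1 (S f) i j x + \<delta>1 (S f i j) x"
        using H1[rule_format, OF S_in[OF f]] unfolding mat_eq_def ae_eq_def mat_add_def entry_der_def .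
      then have "AE x in M. D (S f) 0 0 x = inner_der n a1 (S f) 0 0 x + \<delta>1 (S f 0 0) x"
        using n0 by blast
      then have e1: "AE x in M. D (S f) 0 0 x = \<delta>1 f x"
        unfolding S00 inner_S00[OF n0] by simp
      have "\<forall>i<n. \<forall>j<n. AE x in M. D (S f) i j x = inner_der n a2 (S f) i j x + \<delta>2 (S f i j) x"
        using H2[rule_format, OF S_in[OF f]] unfolding mat_eq_def ae_eq_def mat_add_def entry_der_def .
      then have "AE x in M. D (S f) 0 0 x = inner_der n a2 (S f) 0 0 x + \<delta>2 (S f 0 0) x"
        using n0 by blast
      then have e2: "AE x in M. D (S f) 0 0 x = \<delta>2 f x"
        unfolding S00 inner_S00[OF n0] by simp
      from e1 e2 show ?thesis unfolding ae_eq_def by eventually_elim simp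
    qed
    have P2: "\<forall>X\<in>matL0 M n. mat_eq M n (inner_der n a1 X) (inner_der n a2 X)"
    proof
    fix X assume X: "X \<in> matL0 M n"
    have e3: "AE x in M. \<forall>i<n. \<forall>j<n. \<delta>1 (X i j) x = \<delta>2 (X i j) x"
      using dd X unfolding matL0_def ae_eq_def AE_all_lt[where M=M and n=n] by blast
    from H1[rule_format, OF X] H2[rule_format, OF X] e3
    show "mat_eq M n (inner_der n a1 X) (inner_der n a2 X)"
      unfolding mat_eq_AE
    proof eventually_elim
      case (elim x)
      note a = elim(1) and b = elim(2) and c = elim(3)
      show ?case
      proof (intro allI impI)
      fix i j assume i: "i < n" and j: "j < n"
      have "inner_der n a1 X i j x + \<delta>1 (X i j) x = inner_der n a2 X i j x + \<delta>2 (X i j) x"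
        using a[rule_format, OF i j] b[rule_format, OF i j] by (simp add: mat_add_def entry_der_def)
      then show "inner_der n a1 X i j x = inner_der n a2 X i j x"
        using c[rule_format, OF i j] by simp
      qed
    qed
    qed
    show "(\<forall>f\<in>L0 M. ae_eq M (\<delta>1 f) (\<delta>2 f)) \<and> (\<forall>X\<in>matL0 M n. mat_eq M n (inner_der n a1 X) (inner_der n a2 X))"
      using dd P2 by blast
  qed
  show ?thesis using ex un by blast
qed

end
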